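(* If $K\subset L^1$ is uniformly integrable, then its closed convex hull in $L^1$ is also uniformly integrable.
   Context: $(\Omega,\mathcal F)$ is a measurable space, $\mathcal H$ a linear space of $\mathcal F$-measurable real functions containing the constants, closed under $X\mapsto|X|$ and $X\mapsto I_AX$ ($A\in\mathcal F$), and $\mathcal E:\mathcal H\to\mathbb R$ is a sublinear expectation (monotone, constant preserving, subadditive, positively homogeneous) with the monotone continuity property ($X_i\downarrow 0$ pointwise implies $\mathcal E(X_i)\to0$). $\|X\|_1:=\mathcal E(|X|)$ and $L^1$ is the completion of $\{X\in\mathcal H:\|X\|_1<\infty\}$ under this seminorm modulo null elements. A set $K\subset L^1$ is uniformly integrable if $\sup_{X\in K}\mathcal E(I_{\{|X|\ge c\}}|X|)\to0$ as $c\to\infty$. *)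

theory Defs
  imports "HOL-Analysis.Analysis"
begin

definition sublinear_expectation_space ::
  "'a measure \<Rightarrow> ('a \<Rightarrow> real) set \<Rightarrow> (('a \<Rightarrow> real) \<Rightarrow> real) \<Rightarrow> bool" where
  "sublinear_expectation_space M H E \<longleftrightarrow>
     H \<subseteq> borel_measurable M
   \<and> (\<forall>c. (\<lambda>_. c) \<in> H)
   \<and> (\<forall>X\<in>H. \<forall>Y\<in>H. (\<lambda>w. X w + Y w) \<in> H)
   \<and> (\<forall>X\<in>H. \<forall>c. (\<lambda>w. c * X w) \<in> H)
   \<and> (\<forall>X\<in>H. (\<lambda>w. \<bar>X w\<bar>) \<in> H)
   \<and> (\<forall>X\<in>H. \<forall>A\<in>sets M. (\<lambda>w. indicator A w * X w) \<in> H)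
   \<and> (\<forall>X\<in>H. \<forall>Y\<in>H. (\<forall>w\<in>space M. X w \<le> Y w) \<longrightarrow> E X \<le> E Y)
   \<and> (\<forall>c. E (\<lambda>_. c) = c)
   \<and> (\<forall>X\<in>H. \<forall>Y\<in>H. E (\<lambda>w. X w + Y w) \<le> E X + E Y)
   \<and> (\<forall>X\<in>H. \<forall>c\<ge>0. E (\<lambda>w. c * X w) = c * E X)
   \<and> (\<forall>Xs. (\<forall>i. Xs i \<in> H) \<longrightarrow>
          (\<forall>w\<in>space M. decseq (\<lambda>i. Xs i w) \<and> (\<lambda>i. Xs i w) \<longlonglongrightarrow> 0) \<longrightarrow>
          (\<lambda>i. E (Xs i)) \<longlonglongrightarrow> 0)"

text \<open>Canonical extension of E to nonnegative measurable functions (the value the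
 continuous extension of E to the completion L^1 takes on nonnegative elements).\<close>
definition ext_E ::
  "'a measure \<Rightarrow> ('a \<Rightarrow> real) set \<Rightarrow> (('a \<Rightarrow> real) \<Rightarrow> real) \<Rightarrow> ('a \<Rightarrow> real) \<Rightarrow> ereal" where
  "ext_E M H E Y = (SUP Z \<in> {Z \<in> H. \<forall>w\<in>space M. 0 \<le> Z w \<and> Z w \<le> Y w}. ereal (E Z))"

text \<open>L^1: measurable functions that are L^1-limits of elements of H
 (representatives of the completion; null elements are not quotiented out).\<close>
definition L1 ::
  "'a measure \<Rightarrow> ('a \<Rightarrow> real) set \<Rightarrow> (('a \<Rightarrow> real) \<Rightarrow> real) \<Rightarrow> ('a \<Rightarrow> real) set" where
  "L1 M H E = {X \<in> borel_measurable M. \<exists>Xs. (\<forall>n. Xs n \<in> H) \<and>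
       (\<lambda>n. ext_E M H E (\<lambda>w. \<bar>X w - Xs n w\<bar>)) \<longlonglongrightarrow> 0}"

definition convex_hull_fun :: "('a \<Rightarrow> real) set \<Rightarrow> ('a \<Rightarrow> real) set" where
  "convex_hull_fun K = {Y. \<exists>(n::nat) a Xs. n > 0 \<and> (\<forall>i<n. 0 \<le> a i \<and> Xs i \<in> K) \<and>
       (\<Sum>i<n. a i) = (1::real) \<and> Y = (\<lambda>w. \<Sum>i<n. a i * Xs i w)}"

definition L1_closure ::
  "'a measure \<Rightarrow> ('a \<Rightarrow> real) set \<Rightarrow> (('a \<Rightarrow> real) \<Rightarrow> real) \<Rightarrow> ('a \<Rightarrow> real) set \<Rightarrow> ('a \<Rightarrow> real) set" where
  "L1_closure M H E S = {X \<in> L1 M H E. \<forall>e>0. \<exists>Y\<in>S.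
       ext_E M H E (\<lambda>w. \<bar>X w - Y w\<bar>) < ereal e}"

definition closed_convex_hull_L1 ::
  "'a measure \<Rightarrow> ('a \<Rightarrow> real) set \<Rightarrow> (('a \<Rightarrow> real) \<Rightarrow> real) \<Rightarrow> ('a \<Rightarrow> real) set \<Rightarrow> ('a \<Rightarrow> real) set" where
  "closed_convex_hull_L1 M H E K = L1_closure M H E (convex_hull_fun K)"

definition uniformly_integrable ::
  "'a measure \<Rightarrow> ('a \<Rightarrow> real) set \<Rightarrow> (('a \<Rightarrow> real) \<Rightarrow> real) \<Rightarrow> ('a \<Rightarrow> real) set \<Rightarrow> bool" where
  "uniformly_integrable M H E K \<longleftrightarrow> K \<subseteq> L1 M H E \<and>
     (\<forall>e>0. \<exists>c0. \<forall>c\<ge>c0. \<forall>X\<in>K.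
        ext_E M H E (\<lambda>w. indicator {w. \<bar>X w\<bar> \<ge> c} w * \<bar>X w\<bar>) \<le> ereal e)"

end

theory Submission
  imports Defs
begin


lemma SE_meas:
  assumes SE: "sublinear_expectation_space M H E"
  shows "H \<subseteq> borel_measurable M"
proof -
  have h: "H \<subseteq> borel_measurable M" using SE unfolding sublinear_expectation_space_def by (elim conjE) assumption
  show ?thesis by (rule h)
qed

lemma SE_const:
  assumes SE: "sublinear_expectation_space M H E"
  shows "(\<lambda>_. c) \<in> H"
proof -
  have h: "\<forall>c. (\<lambda>_. c) \<in> H" using SE unfolding sublinear_expectation_space_def by (elim conjE) assumption
  show ?thesis using h by (rule spec)
qed

lemma SE_add:
  assumes SE: "sublinear_expectation_space M H E"
    and a: "X \<in> H" "Y \<in> H"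
  shows "(\<lambda>w. X w + Y w) \<in> H"
proof -
  have h: "\<forall>X\<in>H. \<forall>Y\<in>H. (\<lambda>w. X w + Y w) \<in> H" using SE unfolding sublinear_expectation_space_def by (elim conjE) assumption
  show ?thesis using h a by simp
qed

lemma SE_smult:
  assumes SE: "sublinear_expectation_space M H E"
    and a: "X \<in> H"
  shows "(\<lambda>w. c * X w) \<in> H"
proof -
  have h: "\<forall>X\<in>H. \<forall>c. (\<lambda>w. c * X w) \<in> H" using SE unfolding sublinear_expectation_space_def by (elim conjE) assumption
  show ?thesis using h a by simp
qed

lemma SE_abs:
  assumes SE: "sublinear_expectation_space M H E"
    and a: "X \<in> H"
  shows "(\<lambda>w. \<bar>X w\<bar>) \<in> H"
proof -
  have h: "\<forall>X\<in>H. (\<lambda>w. \<bar>X w\<bar>) \<in> H" using SE unfolding sublinear_expectation_space_def by (elim conjE) assumption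
  show ?thesis using h a by simp
qed

lemma SE_ind:
  assumes SE: "sublinear_expectation_space M H E"
    and a: "X \<in> H" "A \<in> sets M"
  shows "(\<lambda>w. indicator A w * X w) \<in> H"
proof -
  have h: "\<forall>X\<in>H. \<forall>A\<in>sets M. (\<lambda>w. indicator A w * X w) \<in> H" using SE unfolding sublinear_expectation_space_def by (elim conjE) assumption
  show ?thesis using h a by simp
qed

lemma SE_mono:
  assumes SE: "sublinear_expectation_space M H E"
    and a: "X \<in> H" "Y \<in> H" "\<And>w. w \<in> space M \<Longrightarrow> X w \<le> Y w"
  shows "E X \<le> E Y"
proof -
  have h: "\<forall>X\<in>H. \<forall>Y\<in>H. (\<forall>w\<in>space M. X w \<le> Y w) \<longrightarrow> E X \<le> E Y" using SE unfolding sublinear_expectation_space_def by (elim conjE) assumption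
  show ?thesis using h a by simp
qed

lemma SE_cst:
  assumes SE: "sublinear_expectation_space M H E"
  shows "E (\<lambda>_. c) = c"
proof -
  have h: "\<forall>c. E (\<lambda>_. c) = c" using SE unfolding sublinear_expectation_space_def by (elim conjE) assumption
  show ?thesis using h by (rule spec)
qed

lemma SE_sub:
  assumes SE: "sublinear_expectation_space M H E"
    and a: "X \<in> H" "Y \<in> H"
  shows "E (\<lambda>w. X w + Y w) \<le> E X + E Y"
proof -
  have h: "\<forall>X\<in>H. \<forall>Y\<in>H. E (\<lambda>w. X w + Y w) \<le> E X + E Y" using SE unfolding sublinear_expectation_space_def by (elim conjE) assumption
  show ?thesis using h a by simp
qed

lemma SE_hom:
  assumes SE: "sublinear_expectation_space M H E"
    and a: "X \<in> H" "c \<ge> 0"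
  shows "E (\<lambda>w. c * X w) = c * E X"
proof -
  have h: "\<forall>X\<in>H. \<forall>c\<ge>0. E (\<lambda>w. c * X w) = c * E X" using SE unfolding sublinear_expectation_space_def by (elim conjE) assumption
  show ?thesis using h a by simp
qed

lemma SE_cont:
  assumes SE: "sublinear_expectation_space M H E"
    and a: "\<And>i. Xs i \<in> H" "\<And>w. w \<in> space M \<Longrightarrow> decseq (\<lambda>i. Xs i w) \<and> (\<lambda>i. Xs i w) \<longlonglongrightarrow> 0"
  shows "(\<lambda>i. E (Xs i)) \<longlonglongrightarrow> 0"
proof -
  have h: "\<forall>Xs. (\<forall>i. Xs i \<in> H) \<longrightarrow> (\<forall>w\<in>space M. decseq (\<lambda>i. Xs i w) \<and> (\<lambda>i. Xs i w) \<longlonglongrightarrow> 0) \<longrightarrow> (\<lambda>i. E (Xs i)) \<longlonglongrightarrow> 0" using SE unfolding sublinear_expectation_space_def by (elim conjE) assumption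
  show ?thesis proof -
    have "(\<forall>i. Xs i \<in> H) \<longrightarrow> (\<forall>w\<in>space M. decseq (\<lambda>i. Xs i w) \<and> (\<lambda>i. Xs i w) \<longlonglongrightarrow> 0) \<longrightarrow> (\<lambda>i. E (Xs i)) \<longlonglongrightarrow> 0" using h by (rule spec)
    then show ?thesis using a by blast
  qed
qed

lemma SE_diff:
  assumes "sublinear_expectation_space M H E" "X \<in> H" "Y \<in> H"
  shows "(\<lambda>w. X w - Y w) \<in> H"
proof -
  have "(\<lambda>w. X w + (-1) * Y w) \<in> H"
    by (intro SE_add[OF assms(1)] SE_smult[OF assms(1)] assms(2,3))
  then show ?thesis by simp
qed

lemma SE_min:
  assumes "sublinear_expectation_space M H E" "X \<in> H" "Y \<in> H"
  shows "(\<lambda>w. min (X w) (Y w)) \<in> H"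
proof -
  have "(\<lambda>w. (1/2) * ((X w + Y w) - \<bar>X w - Y w\<bar>)) \<in> H"
    by (intro SE_add[OF assms(1)] SE_smult[OF assms(1)] SE_diff[OF assms(1)] SE_abs[OF assms(1)] assms(2,3))
  moreover have "(\<lambda>w. (1/2) * ((X w + Y w) - \<bar>X w - Y w\<bar>)) = (\<lambda>w. min (X w) (Y w))"
  proof
    fix w show "1/2 * ((X w + Y w) - \<bar>X w - Y w\<bar>) = min (X w) (Y w)"
      by (cases "X w \<le> Y w") (simp_all add: min_def abs_if field_simps)
  qed
  ultimately show ?thesis by simp
qed

lemma SE_eqE:
  assumes "sublinear_expectation_space M H E" "X \<in> H" "Y \<in> H" "\<And>w. w \<in> space M \<Longrightarrow> X w = Y w"
  shows "E X = E Y"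
  using SE_mono[OF assms(1) assms(2,3)] SE_mono[OF assms(1) assms(3,2)] assms(4) by force

lemma SE_sum:
  assumes "sublinear_expectation_space M H E" "finite S" "\<And>y. y \<in> S \<Longrightarrow> A y \<in> sets M"
  shows "(\<lambda>x. \<Sum>y\<in>S. c y * indicator (A y) x) \<in> H"
  using assms(2,3)
proof (induction S rule: finite_induct)
  case empty
  then show ?case using SE_const[OF assms(1), of 0] by simp
next
  case (insert a S)
  have t: "(\<lambda>w. c a * (indicator (A a) w * 1)) \<in> H"
    by (intro SE_smult[OF assms(1)] SE_ind[OF assms(1)] SE_const[OF assms(1)] insert.prems) simp
  have "(\<lambda>w. c a * (indicator (A a) w * 1) + (\<Sum>y\<in>S. c y * indicator (A y) w)) \<in> H"
    using SE_add[OF assms(1) t insert.IH] insert.prems by (simp only: mult_1_right insert_iff simp_thms)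
  then show ?case using insert.hyps by (simp only: sum.insert[OF insert.hyps] mult_1_right)
qed

lemma approx_H:
  assumes SE: "sublinear_expectation_space M H E" and Y: "Y \<in> borel_measurable M"
    and nn: "\<And>w. w \<in> space M \<Longrightarrow> 0 \<le> Y w"
  shows "\<exists>u. (\<forall>n. u n \<in> H) \<and> (\<forall>n. \<forall>w\<in>space M. 0 \<le> u n w \<and> u n w \<le> Y w)
      \<and> (\<forall>w\<in>space M. incseq (\<lambda>n. u n w) \<and> (\<lambda>n. u n w) \<longlonglongrightarrow> Y w)"
proof -
  have "(\<lambda>w. ennreal (Y w)) \<in> borel_measurable M" using Y by simp
  then obtain F where F: "\<And>i. simple_function M (F i)" "incseq F" "\<And>i x. F i x < top"
    "\<And>x. (SUP i. F i x) = ennreal (Y x)"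
    using borel_measurable_implies_simple_function_sequence' by metis
  define g where "g i x = enn2real (F i x)" for i x
  have sg: "simple_function M (g i)" for i
    unfolding g_def by (rule simple_function_compose1[OF F(1)])
  define u where "u i = (\<lambda>x. \<Sum>y\<in>g i ` space M. y * indicator (g i -` {y} \<inter> space M) x)" for i
  have uH: "u i \<in> H" for i
    unfolding u_def
    by (rule SE_sum[OF SE], rule simple_functionD(1)[OF sg], rule simple_functionD(2)[OF sg])
  have gnn: "\<And>x. 0 \<le> g i x" for i unfolding g_def by (rule enn2real_nonneg)
  have ug: "u i x = g i x" if "x \<in> space M" for i x
    unfolding u_def by (rule simple_function_indicator_representation_real[OF sg that gnn, symmetric])
  have Fle: "F i x \<le> ennreal (Y x)" for i x
  proof -
    have "F i x \<le> (SUP i. F i x)" by (rule SUP_upper) simp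
    then show ?thesis by (simp only: F(4))
  qed
  have mono: "F i x \<le> F j x" if "i \<le> j" for i j x
    using F(2) that by (simp add: incseq_def le_fun_def)
  show ?thesis
  proof (intro exI[of _ u] conjI allI ballI)
    fix n show "u n \<in> H" by (rule uH)
  next
    fix n w assume w: "w \<in> space M"
    show "0 \<le> u n w" unfolding ug[OF w] by (rule gnn)
    show "u n w \<le> Y w" unfolding ug[OF w] g_def by (rule enn2real_leI[OF nn[OF w] Fle])
  next
    fix w assume w: "w \<in> space M"
    show "incseq (\<lambda>n. u n w)"
    proof (rule incseq_SucI)
      fix n show "u n w \<le> u (Suc n) w" unfolding ug[OF w] g_def
        by (rule enn2real_mono[OF mono F(3)]) simp
    qed
    have "(\<lambda>n. F n w) \<longlonglongrightarrow> ennreal (Y w)"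
    proof -
      have "incseq (\<lambda>n. F n w)" by (rule incseq_SucI, rule mono) simp
      from LIMSEQ_SUP[OF this] show ?thesis by (simp only: F(4))
    qed
    then have "(\<lambda>n. g n w) \<longlonglongrightarrow> Y w"
      unfolding g_def by (rule tendsto_enn2real[OF _ nn[OF w]])
    then show "(\<lambda>n. u n w) \<longlonglongrightarrow> Y w" using ug[OF w] by simp
  qed
qed






lemma ext_mono:
  assumes h: "\<And>w. w \<in> space M \<Longrightarrow> Y1 w \<le> Y2 w"
  shows "ext_E M H E Y1 \<le> ext_E M H E Y2"
  unfolding ext_E_def
proof (rule SUP_subset_mono)
  show "{Z \<in> H. \<forall>w\<in>space M. 0 \<le> Z w \<and> Z w \<le> Y1 w} \<subseteq> {Z \<in> H. \<forall>w\<in>space M. 0 \<le> Z w \<and> Z w \<le> Y2 w}"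
  proof (rule subsetI)
    fix Z assume "Z \<in> {Z \<in> H. \<forall>w\<in>space M. 0 \<le> Z w \<and> Z w \<le> Y1 w}"
    then have Z: "Z \<in> H" "\<And>w. w \<in> space M \<Longrightarrow> 0 \<le> Z w \<and> Z w \<le> Y1 w" by simp_all
    have "\<forall>w\<in>space M. 0 \<le> Z w \<and> Z w \<le> Y2 w"
    proof
      fix w assume w: "w \<in> space M"
      show "0 \<le> Z w \<and> Z w \<le> Y2 w" using Z(2)[OF w] h[OF w] by linarith
    qed
    then show "Z \<in> {Z \<in> H. \<forall>w\<in>space M. 0 \<le> Z w \<and> Z w \<le> Y2 w}" using Z(1) by simp
  qed
qed simp

lemma ext_upper:
  assumes "Z \<in> H" "\<And>w. w \<in> space M \<Longrightarrow> 0 \<le> Z w \<and> Z w \<le> Y w"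
  shows "ereal (E Z) \<le> ext_E M H E Y"
  unfolding ext_E_def by (rule SUP_upper) (simp add: assms)

lemma ext_nonneg:
  assumes SE: "sublinear_expectation_space M H E" and nn: "\<And>w. w \<in> space M \<Longrightarrow> 0 \<le> Y w"
  shows "0 \<le> ext_E M H E Y"
proof -
  have "ereal (E (\<lambda>_. 0)) \<le> ext_E M H E Y"
    by (rule ext_upper[OF SE_const[OF SE]]) (simp add: nn)
  then show ?thesis by (simp add: SE_cst[OF SE] zero_ereal_def)
qed

lemma ext_le_zero:
  assumes SE: "sublinear_expectation_space M H E" and np: "\<And>w. w \<in> space M \<Longrightarrow> Y w \<le> 0"
  shows "ext_E M H E Y \<le> 0"
  unfolding ext_E_def
proof (rule SUP_least)
  fix Z assume "Z \<in> {Z \<in> H. \<forall>w\<in>space M. 0 \<le> Z w \<and> Z w \<le> Y w}"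
  then have Z1: "Z \<in> H" and Z2: "\<And>w. w \<in> space M \<Longrightarrow> Z w \<le> Y w" by simp_all
  have "E Z \<le> E (\<lambda>_. 0)"
  proof (rule SE_mono[OF SE Z1 SE_const[OF SE]])
    fix w assume w: "w \<in> space M"
    show "Z w \<le> 0" using Z2[OF w] np[OF w] by linarith
  qed
  then show "ereal (E Z) \<le> 0" by (simp add: SE_cst[OF SE] zero_ereal_def)
qed

lemma ext_scale:
  assumes SE: "sublinear_expectation_space M H E" and a: "a \<ge> 0"
    and nn: "\<And>w. w \<in> space M \<Longrightarrow> 0 \<le> Y w"
  shows "ext_E M H E (\<lambda>w. a * Y w) \<le> ereal a * ext_E M H E Y"
proof (cases "a = 0")
  case True
  have le: "ext_E M H E (\<lambda>w. a * Y w) \<le> 0" by (rule ext_le_zero[OF SE]) (simp add: True)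
  have eq: "ereal a * ext_E M H E Y = 0" by (simp add: True zero_ereal_def[symmetric])
  show ?thesis unfolding eq by (rule le)
next
  case False
  then have apos: "a > 0" using a by simp
  show ?thesis unfolding ext_E_def[of M H E "\<lambda>w. a * Y w"]
  proof (rule SUP_least)
    fix Z assume "Z \<in> {Z \<in> H. \<forall>w\<in>space M. 0 \<le> Z w \<and> Z w \<le> a * Y w}"
    then have Z1: "Z \<in> H" and Z2: "\<And>w. w \<in> space M \<Longrightarrow> 0 \<le> Z w \<and> Z w \<le> a * Y w" by simp_all
    define Z' where "Z' = (\<lambda>w. (1/a) * Z w)"
    have Z'H: "Z' \<in> H" unfolding Z'_def by (rule SE_smult[OF SE Z1])
    have Z'b: "0 \<le> Z' w \<and> Z' w \<le> Y w" if w: "w \<in> space M" for w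
    proof
      show "0 \<le> Z' w" unfolding Z'_def using Z2[OF w] apos by simp
      have "Z w \<le> a * Y w" using Z2[OF w] by simp
      then have "Z w / a \<le> Y w" using apos by (simp add: divide_le_eq mult.commute)
      then show "Z' w \<le> Y w" unfolding Z'_def by simp
    qed
    have "(\<lambda>w. a * Z' w) = Z" using apos by (simp add: Z'_def)
    then have "E Z = a * E Z'" using SE_hom[OF SE Z'H a] by simp
    then have "ereal (E Z) = ereal a * ereal (E Z')" by simp
    also have "\<dots> \<le> ereal a * ext_E M H E Y"
      by (rule ereal_mult_left_mono[OF ext_upper[OF Z'H Z'b] ereal_less_eq(5)[THEN iffD2, OF a]])
    finally show "ereal (E Z) \<le> ereal a * ext_E M H E Y" .
  qed
qed

lemma ext_subadd:
  assumes SE: "sublinear_expectation_space M H E"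
    and Y1: "Y1 \<in> borel_measurable M" and Y2: "Y2 \<in> borel_measurable M"
    and nn1: "\<And>w. w \<in> space M \<Longrightarrow> 0 \<le> Y1 w" and nn2: "\<And>w. w \<in> space M \<Longrightarrow> 0 \<le> Y2 w"
  shows "ext_E M H E (\<lambda>w. Y1 w + Y2 w) \<le> ext_E M H E Y1 + ext_E M H E Y2"
  unfolding ext_E_def[of M H E "\<lambda>w. Y1 w + Y2 w"]
proof (rule SUP_least)
  fix Z assume "Z \<in> {Z \<in> H. \<forall>w\<in>space M. 0 \<le> Z w \<and> Z w \<le> Y1 w + Y2 w}"
  then have ZH: "Z \<in> H" and Zb: "\<And>w. w \<in> space M \<Longrightarrow> 0 \<le> Z w \<and> Z w \<le> Y1 w + Y2 w" by auto
  have ex1: "\<exists>U. (\<forall>n. U n \<in> H) \<and> (\<forall>n. \<forall>w\<in>space M. 0 \<le> U n w \<and> U n w \<le> Y1 w)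
      \<and> (\<forall>w\<in>space M. incseq (\<lambda>n. U n w) \<and> (\<lambda>n. U n w) \<longlonglongrightarrow> Y1 w)"
    by (rule approx_H[OF SE Y1]) (erule nn1)
  then obtain u where uall: "(\<forall>n. u n \<in> H) \<and> (\<forall>n. \<forall>w\<in>space M. 0 \<le> u n w \<and> u n w \<le> Y1 w)
      \<and> (\<forall>w\<in>space M. incseq (\<lambda>n. u n w) \<and> (\<lambda>n. u n w) \<longlonglongrightarrow> Y1 w)"
    by (rule exE)
  have uH: "\<And>n. u n \<in> H" using uall by blast
  have ub: "\<And>n w. w \<in> space M \<Longrightarrow> 0 \<le> u n w \<and> u n w \<le> Y1 w" using uall by blast
  have uinc: "\<And>w. w \<in> space M \<Longrightarrow> incseq (\<lambda>n. u n w)" using uall by blast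
  have ulim: "\<And>w. w \<in> space M \<Longrightarrow> (\<lambda>n. u n w) \<longlonglongrightarrow> Y1 w" using uall by blast
  have ex2: "\<exists>U. (\<forall>n. U n \<in> H) \<and> (\<forall>n. \<forall>w\<in>space M. 0 \<le> U n w \<and> U n w \<le> Y2 w)
      \<and> (\<forall>w\<in>space M. incseq (\<lambda>n. U n w) \<and> (\<lambda>n. U n w) \<longlonglongrightarrow> Y2 w)"
    by (rule approx_H[OF SE Y2]) (erule nn2)
  then obtain v where vall: "(\<forall>n. v n \<in> H) \<and> (\<forall>n. \<forall>w\<in>space M. 0 \<le> v n w \<and> v n w \<le> Y2 w)
      \<and> (\<forall>w\<in>space M. incseq (\<lambda>n. v n w) \<and> (\<lambda>n. v n w) \<longlonglongrightarrow> Y2 w)"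
    by (rule exE)
  have vH: "\<And>n. v n \<in> H" using vall by blast
  have vb: "\<And>n w. w \<in> space M \<Longrightarrow> 0 \<le> v n w \<and> v n w \<le> Y2 w" using vall by blast
  have vinc: "\<And>w. w \<in> space M \<Longrightarrow> incseq (\<lambda>n. v n w)" using vall by blast
  have vlim: "\<And>w. w \<in> space M \<Longrightarrow> (\<lambda>n. v n w) \<longlonglongrightarrow> Y2 w" using vall by blast
  define a where "a n = (\<lambda>w. min (Z w) (u n w))" for n
  define b where "b n = (\<lambda>w. min (Z w - a n w) (v n w))" for n
  define D where "D n = (\<lambda>w. Z w - (a n w + b n w))" for n
  have aH: "a n \<in> H" for n unfolding a_def by (rule SE_min[OF SE ZH uH])
  have bH: "b n \<in> H" for n unfolding b_def by (rule SE_min[OF SE SE_diff[OF SE ZH aH] vH])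
  have abH: "(\<lambda>w. a n w + b n w) \<in> H" for n by (rule SE_add[OF SE aH bH])
  have DH: "D n \<in> H" for n unfolding D_def by (rule SE_diff[OF SE ZH abH])
  have ab_eq: "a n w + b n w = min (Z w) (min (Z w) (u n w) + v n w)" for n w
    unfolding a_def b_def by (simp add: min_add_distrib_left)
  have Dlim: "(\<lambda>n. E (D n)) \<longlonglongrightarrow> 0"
  proof (rule SE_cont[OF SE DH])
    fix w assume w: "w \<in> space M"
    have "decseq (\<lambda>n. D n w)"
    proof (rule decseq_SucI)
      fix n
      have "u n w \<le> u (Suc n) w" using uinc[OF w] by (simp add: incseq_def)
      moreover have "v n w \<le> v (Suc n) w" using vinc[OF w] by (simp add: incseq_def)
      ultimately have "min (Z w) (min (Z w) (u n w) + v n w) \<le> min (Z w) (min (Z w) (u (Suc n) w) + v (Suc n) w)"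
        by (intro min.mono add_mono order.refl)
      then show "D (Suc n) w \<le> D n w" unfolding D_def ab_eq by simp
    qed
    moreover have "(\<lambda>n. D n w) \<longlonglongrightarrow> Z w - min (Z w) (min (Z w) (Y1 w) + Y2 w)"
      unfolding D_def ab_eq
      by (intro tendsto_intros ulim[OF w] vlim[OF w])
    moreover have "min (Z w) (min (Z w) (Y1 w) + Y2 w) = Z w"
      using Zb[OF w] nn2[OF w] by (auto simp: min_def)
    ultimately show "decseq (\<lambda>i. D i w) \<and> (\<lambda>i. D i w) \<longlonglongrightarrow> 0" by simp
  qed
  have bound: "E Z - E (D n) \<le> ext_E M H E Y1 + ext_E M H E Y2" for n
  proof -
    have "Z = (\<lambda>w. (a n w + b n w) + D n w)" unfolding D_def by simp
    then have "E Z \<le> E (\<lambda>w. a n w + b n w) + E (D n)"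
      using SE_sub[OF SE abH DH, of n] by simp
    also have "E (\<lambda>w. a n w + b n w) \<le> E (a n) + E (b n)" by (rule SE_sub[OF SE aH bH])
    finally have 1: "E Z - E (D n) \<le> E (a n) + E (b n)" by simp
    have "ereal (E (a n)) \<le> ext_E M H E Y1"
    proof (rule ext_upper[OF aH])
      fix w assume w: "w \<in> space M"
      show "0 \<le> a n w \<and> a n w \<le> Y1 w"
        using ub[OF w, of n] Zb[OF w] unfolding a_def by (simp add: min.coboundedI2)
    qed
    moreover have "ereal (E (b n)) \<le> ext_E M H E Y2"
    proof (rule ext_upper[OF bH])
      fix w assume w: "w \<in> space M"
      show "0 \<le> b n w \<and> b n w \<le> Y2 w"
      proof
        have "min (Z w) (u n w) \<le> Z w" by simp
        then show "0 \<le> b n w" using vb[OF w, of n] unfolding b_def a_def by simp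
        show "b n w \<le> Y2 w" using vb[OF w, of n] unfolding b_def by (simp add: min.coboundedI2)
      qed
    qed
    ultimately have "ereal (E (a n)) + ereal (E (b n)) \<le> ext_E M H E Y1 + ext_E M H E Y2"
      by (rule add_mono)
    moreover have "ereal (E Z - E (D n)) \<le> ereal (E (a n)) + ereal (E (b n))"
      using 1 by simp
    ultimately show ?thesis by (rule order.trans[rotated])
  qed
  show "ereal (E Z) \<le> ext_E M H E Y1 + ext_E M H E Y2"
  proof (rule ccontr)
    assume "\<not> ?thesis"
    then have lt: "ext_E M H E Y1 + ext_E M H E Y2 < ereal (E Z)" by simp
    have "0 \<le> ext_E M H E Y1 + ext_E M H E Y2"
      using ext_nonneg[OF SE nn1] ext_nonneg[OF SE nn2] by simp
    then obtain s where s: "ext_E M H E Y1 + ext_E M H E Y2 = ereal s"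
      using lt by (cases "ext_E M H E Y1 + ext_E M H E Y2") auto
    have "E Z - E (D n) \<le> s" for n using bound[of n] s by simp
    moreover have "(\<lambda>n. E Z - E (D n)) \<longlonglongrightarrow> E Z - 0" by (intro tendsto_intros Dlim)
    ultimately have "E Z \<le> s" by (simp add: LIMSEQ_le_const2)
    then show False using lt s by simp
  qed
qed

lemma ext_sum:
  fixes n :: nat
  assumes SE: "sublinear_expectation_space M H E"
  shows "(\<And>i. i < n \<Longrightarrow> f i \<in> borel_measurable M) \<Longrightarrow>
    (\<And>i w. i < n \<Longrightarrow> w \<in> space M \<Longrightarrow> 0 \<le> f i w) \<Longrightarrow>
    ext_E M H E (\<lambda>w. \<Sum>i<n. f i w) \<le> (\<Sum>i<n. ext_E M H E (f i))"
proof (induction n)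
  case 0
  then show ?case using ext_le_zero[OF SE, of "\<lambda>w. \<Sum>i<0. f i w"] by simp
next
  case (Suc n)
  have "ext_E M H E (\<lambda>w. \<Sum>i<Suc n. f i w) = ext_E M H E (\<lambda>w. (\<Sum>i<n. f i w) + f n w)" by simp
  also have "\<dots> \<le> ext_E M H E (\<lambda>w. \<Sum>i<n. f i w) + ext_E M H E (f n)"
  proof (rule ext_subadd[OF SE])
    show "(\<lambda>w. \<Sum>i<n. f i w) \<in> borel_measurable M"
      by (rule borel_measurable_sum) (rule Suc.prems(1), simp)
    show "f n \<in> borel_measurable M" by (rule Suc.prems(1)) simp
    fix w assume w: "w \<in> space M"
    show "0 \<le> (\<Sum>i<n. f i w)" by (rule sum_nonneg) (rule Suc.prems(2)[OF _ w], simp)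
    show "0 \<le> f n w" by (rule Suc.prems(2)[OF _ w]) simp
  qed
  also have "\<dots> \<le> (\<Sum>i<n. ext_E M H E (f i)) + ext_E M H E (f n)"
  proof (rule add_right_mono, rule Suc.IH)
    show "\<And>i. i < n \<Longrightarrow> f i \<in> borel_measurable M" by (rule Suc.prems(1)) simp
    show "\<And>i w. i < n \<Longrightarrow> w \<in> space M \<Longrightarrow> 0 \<le> f i w" by (rule Suc.prems(2)) simp_all
  qed
  finally show ?case by simp
qed

lemma lin1:
  fixes a b u d T S :: real
  assumes "a \<le> b + u" "0 \<le> b" "u - d \<le> T" "T \<le> S" "2 * d \<le> u"
  shows "a \<le> 2 * b + 2 * S"
  using assms by linarith

lemma lin2:
  fixes a b u d c S :: real
  assumes "a \<le> b + u" "0 \<le> b" "\<not> 2 * d \<le> u" "c = 4 * d" "c \<le> a" "0 \<le> S"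
  shows "a \<le> 2 * b + 2 * S"
  using assms by linarith

lemma pointwise_bound:
  fixes x y d c T S :: real
  assumes "c = 4 * d" "d > 0" "\<bar>y\<bar> - d \<le> T" "0 \<le> T" "T \<le> S" "0 \<le> S"
  shows "(if c \<le> \<bar>x\<bar> then \<bar>x\<bar> else 0) \<le> 2 * \<bar>x - y\<bar> + 2 * S"
proof (cases "c \<le> \<bar>x\<bar>")
  case True
  then have l: "(if c \<le> \<bar>x\<bar> then \<bar>x\<bar> else 0) = \<bar>x\<bar>" by simp
  have tri: "\<bar>x\<bar> \<le> \<bar>x - y\<bar> + \<bar>y\<bar>" using abs_triangle_ineq[of "x - y" y] by simp
  have "\<bar>x\<bar> \<le> 2 * \<bar>x - y\<bar> + 2 * S"
  proof (cases "2 * d \<le> \<bar>y\<bar>")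
    case True
    have "0 \<le> \<bar>x - y\<bar>" by simp
    then show ?thesis using lin1[OF tri _ assms(3,5) True] by simp
  next
    case False
    have "0 \<le> \<bar>x - y\<bar>" by simp
    then show ?thesis using lin2[OF tri _ False assms(1) \<open>c \<le> \<bar>x\<bar>\<close> assms(6)] by simp
  qed
  then show ?thesis unfolding l .
next
  case False
  then have l: "(if c \<le> \<bar>x\<bar> then \<bar>x\<bar> else 0) = 0" by simp
  have "0 \<le> \<bar>x - y\<bar>" by simp
  then show ?thesis unfolding l using assms(6) by simp
qed




theorem corollary2p14:
  fixes M :: "'a measure" and H :: "('a \<Rightarrow> real) set" and E :: "('a \<Rightarrow> real) \<Rightarrow> real"
    and K :: "('a \<Rightarrow> real) set"
  assumes "sublinear_expectation_space M H E"
    and "uniformly_integrable M H E K"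
  shows "uniformly_integrable M H E (closed_convex_hull_L1 M H E K)"
proof -
  note SE = assms(1)
  have KL1: "K \<subseteq> L1 M H E"
    and UI: "\<forall>e>0. \<exists>c0. \<forall>c\<ge>c0. \<forall>X\<in>K.
        ext_E M H E (\<lambda>w. indicator {w. \<bar>X w\<bar> \<ge> c} w * \<bar>X w\<bar>) \<le> ereal e"
    using assms(2) unfolding uniformly_integrable_def by (rule conjunct1, rule conjunct2)
  have L1m: "X \<in> borel_measurable M" if "X \<in> L1 M H E" for X
    using that unfolding L1_def by auto
  have SL1: "closed_convex_hull_L1 M H E K \<subseteq> L1 M H E"
    unfolding closed_convex_hull_L1_def L1_closure_def by auto
  show ?thesis unfolding uniformly_integrable_def
  proof (intro conjI SL1 allI impI)
    fix e :: real assume e: "e > 0"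
    then have "e / 4 > 0" by simp
    then obtain c1 where c1: "\<And>c X. c1 \<le> c \<Longrightarrow> X \<in> K \<Longrightarrow>
        ext_E M H E (\<lambda>w. indicator {w. \<bar>X w\<bar> \<ge> c} w * \<bar>X w\<bar>) \<le> ereal (e/4)"
      using UI by meson
    show "\<exists>c0. \<forall>c\<ge>c0. \<forall>X\<in>closed_convex_hull_L1 M H E K.
        ext_E M H E (\<lambda>w. indicator {w. c \<le> \<bar>X w\<bar>} w * \<bar>X w\<bar>) \<le> ereal e"
    proof (intro exI[of _ "4 * max c1 1"] allI impI ballI)
      fix c X assume c: "4 * max c1 1 \<le> c" and X: "X \<in> closed_convex_hull_L1 M H E K"
      define d where "d = c / 4"
      have d: "c1 \<le> d" "0 < d" "c = 4 * d" using c by (auto simp: d_def)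
      have XL1: "X \<in> L1 M H E"
        and Xapp: "\<And>e'. e' > 0 \<Longrightarrow> \<exists>Y\<in>convex_hull_fun K. ext_E M H E (\<lambda>w. \<bar>X w - Y w\<bar>) < ereal e'"
        using X unfolding closed_convex_hull_L1_def L1_closure_def by auto
      obtain Y where Yc: "Y \<in> convex_hull_fun K" and Yd: "ext_E M H E (\<lambda>w. \<bar>X w - Y w\<bar>) < ereal (e/4)"
        using Xapp[OF \<open>e/4 > 0\<close>] by blast
      obtain n :: nat and a Xs where n: "n > 0" and aX0: "\<forall>i<n. 0 \<le> a i \<and> Xs i \<in> K"
        and asum: "(\<Sum>i<n. a i) = (1::real)" and Yeq: "Y = (\<lambda>w. \<Sum>i<n. a i * Xs i w)"
        using Yc unfolding convex_hull_fun_def mem_Collect_eq by (elim exE conjE) blast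
      have aX: "\<And>i. i < n \<Longrightarrow> 0 \<le> a i \<and> Xs i \<in> K" using aX0 by blast
      have Xm: "X \<in> borel_measurable M" by (rule L1m[OF XL1])
      have Xsm: "Xs i \<in> borel_measurable M" if "i < n" for i
        using L1m KL1 aX[OF that] by blast
      have Ym: "Y \<in> borel_measurable M" unfolding Yeq
        by (rule borel_measurable_sum, rule borel_measurable_times[OF borel_measurable_const Xsm]) simp
      define G where "G i = (\<lambda>w. indicator {w. d \<le> \<bar>Xs i w\<bar>} w * \<bar>Xs i w\<bar>)" for i
      have Gm: "G i \<in> borel_measurable M" if "i < n" for i
      proof -
        have [measurable]: "Xs i \<in> borel_measurable M" by (rule Xsm[OF that])
        show ?thesis unfolding G_def by measurable
      qed
      have Gnn: "0 \<le> G i w" for i w unfolding G_def by (simp split: split_indicator)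
      have G_le: "ext_E M H E (G i) \<le> ereal (e/4)" if "i < n" for i
        unfolding G_def by (rule c1[OF d(1)]) (use aX[OF that] in blast)
      define F where "F = (\<lambda>w. \<Sum>i<n. (2 * a i) * G i w)"
      have Fim: "(\<lambda>w. (2 * a i) * G i w) \<in> borel_measurable M" if "i < n" for i
        by (rule borel_measurable_times[OF borel_measurable_const Gm[OF that]])
      have Fm: "F \<in> borel_measurable M" unfolding F_def
        by (rule borel_measurable_sum, rule Fim) simp
      have Fnn: "0 \<le> F w" for w unfolding F_def using aX Gnn by (auto intro!: sum_nonneg)
      have pw: "indicator {w. c \<le> \<bar>X w\<bar>} w * \<bar>X w\<bar> \<le> 2 * \<bar>X w - Y w\<bar> + F w" for w
      proof -
        define T where "T = (\<Sum>i<n. a i * max (\<bar>Xs i w\<bar> - d) 0)"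
        define S where "S = (\<Sum>i<n. a i * G i w)"
        have "\<bar>Y w\<bar> \<le> (\<Sum>i<n. \<bar>a i * Xs i w\<bar>)"
          unfolding Yeq by (rule sum_abs)
        also have "\<dots> = (\<Sum>i<n. a i * \<bar>Xs i w\<bar>)"
          by (rule sum.cong) (use aX in \<open>auto simp: abs_mult\<close>)
        also have "\<dots> = (\<Sum>i<n. a i * (\<bar>Xs i w\<bar> - d)) + d"
        proof -
          have "(\<Sum>i<n. a i * (\<bar>Xs i w\<bar> - d)) = (\<Sum>i<n. a i * \<bar>Xs i w\<bar>) - (\<Sum>i<n. a i) * d"
            by (simp add: right_diff_distrib sum_subtractf sum_distrib_right)
          then show ?thesis using asum by simp
        qed
        also have "(\<Sum>i<n. a i * (\<bar>Xs i w\<bar> - d)) \<le> T"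
          unfolding T_def using aX by (intro sum_mono mult_left_mono) auto
        finally have 1: "\<bar>Y w\<bar> - d \<le> T" by simp
        have 2: "0 \<le> T" unfolding T_def using aX by (auto intro!: sum_nonneg)
        have 3: "T \<le> S" unfolding T_def S_def G_def using aX d(2)
          by (intro sum_mono mult_left_mono) (auto split: split_indicator)
        have 4: "0 \<le> S" unfolding S_def using aX Gnn by (auto intro!: sum_nonneg)
        have "F w = 2 * S" unfolding F_def S_def by (simp add: sum_distrib_left mult_ac)
        moreover have "indicator {w. c \<le> \<bar>X w\<bar>} w * \<bar>X w\<bar> = (if c \<le> \<bar>X w\<bar> then \<bar>X w\<bar> else 0)"
          by (simp split: split_indicator)
        ultimately show ?thesis using pointwise_bound[OF d(3) d(2) 1 2 3 4, of "X w"] by simp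
      qed
      have "ext_E M H E (\<lambda>w. indicator {w. c \<le> \<bar>X w\<bar>} w * \<bar>X w\<bar>)
          \<le> ext_E M H E (\<lambda>w. 2 * \<bar>X w - Y w\<bar> + F w)"
        by (rule ext_mono) (rule pw)
      also have "\<dots> \<le> ext_E M H E (\<lambda>w. 2 * \<bar>X w - Y w\<bar>) + ext_E M H E F"
      proof (rule ext_subadd[OF SE _ Fm])
        have [measurable]: "X \<in> borel_measurable M" "Y \<in> borel_measurable M" by (rule Xm, rule Ym)
        show "(\<lambda>w. 2 * \<bar>X w - Y w\<bar>) \<in> borel_measurable M" by measurable
        show "\<And>w. w \<in> space M \<Longrightarrow> 0 \<le> 2 * \<bar>X w - Y w\<bar>" by simp
        show "\<And>w. w \<in> space M \<Longrightarrow> 0 \<le> F w" by (rule Fnn)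
      qed
      finally have A: "ext_E M H E (\<lambda>w. indicator {w. c \<le> \<bar>X w\<bar>} w * \<bar>X w\<bar>) \<le> ext_E M H E (\<lambda>w. 2 * \<bar>X w - Y w\<bar>) + ext_E M H E F" .
      have B: "ext_E M H E (\<lambda>w. 2 * \<bar>X w - Y w\<bar>) \<le> ereal (e/2)"
      proof -
        have "ext_E M H E (\<lambda>w. 2 * \<bar>X w - Y w\<bar>) \<le> ereal 2 * ext_E M H E (\<lambda>w. \<bar>X w - Y w\<bar>)"
          by (rule ext_scale[OF SE]) auto
        also have "\<dots> \<le> ereal 2 * ereal (e/4)"
          by (rule ereal_mult_left_mono[OF less_imp_le[OF Yd]]) simp
        finally show ?thesis by simp
      qed
      have C: "ext_E M H E F \<le> ereal (e/2)"
      proof -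
        have "ext_E M H E F \<le> (\<Sum>i<n. ext_E M H E (\<lambda>w. (2 * a i) * G i w))"
          unfolding F_def
        proof (rule ext_sum[OF SE])
          show "\<And>i. i < n \<Longrightarrow> (\<lambda>w. 2 * a i * G i w) \<in> borel_measurable M" by (rule Fim)
          show "\<And>i w. i < n \<Longrightarrow> w \<in> space M \<Longrightarrow> 0 \<le> 2 * a i * G i w"
            using aX Gnn by simp
        qed
        also have "\<dots> \<le> (\<Sum>i<n. ereal (2 * a i * (e/4)))"
        proof (rule sum_mono)
          fix i assume "i \<in> {..<n}"
          then have i: "i < n" by simp
          have "ext_E M H E (\<lambda>w. (2 * a i) * G i w) \<le> ereal (2 * a i) * ext_E M H E (G i)"
            by (rule ext_scale[OF SE]) (use aX[OF i] Gnn in auto)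
          also have "\<dots> \<le> ereal (2 * a i) * ereal (e/4)"
            by (rule ereal_mult_left_mono[OF G_le[OF i]]) (use aX[OF i] in simp)
          finally show "ext_E M H E (\<lambda>w. (2 * a i) * G i w) \<le> ereal (2 * a i * (e/4))" by simp
        qed
        also have "\<dots> = ereal (e/2)"
        proof -
          have "(\<Sum>i<n. 2 * a i * (e/4)) = (e/2) * (\<Sum>i<n. a i)"
            by (simp add: sum_distrib_left mult_ac)
          then show ?thesis using asum by simp
        qed
        finally show ?thesis .
      qed
      have "ext_E M H E (\<lambda>w. indicator {w. c \<le> \<bar>X w\<bar>} w * \<bar>X w\<bar>) \<le> ereal (e/2) + ereal (e/2)"
        by (rule order.trans[OF A add_mono[OF B C]])
      then show "ext_E M H E (\<lambda>w. indicator {w. c \<le> \<bar>X w\<bar>} w * \<bar>X w\<bar>) \<le> ereal e"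
        by simp
    qed
  qed
qed


end
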